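(* Let $r\ge1$ be an integer and $N(u)=(1-u^{-1})^r$. Then (a) $\zeta_N(s)=\zeta_{\mathbb G_m^r/\mathbb F_1}(s+r)$; (b) $\zeta_{N^*}(s)=\zeta_{\mathbb G_m^r/\mathbb F_1}(s)^{(-1)^r}$; (c) $\zeta_{\mathbb G_m^r/\mathbb F_1}(r-s)=\zeta_{\mathbb G_m^r/\mathbb F_1}(s)^{(-1)^r}$.
   Context: For measurable $N:(1,\infty)\to\mathbb C$ let $Z_N(w,s)=\frac1{\Gamma(w)}\int_1^\infty\frac{N(u)}{u^{s+1}}(\log u)^{w-1}du$ (convergent for $\operatorname{Re}(s)$ large and $w$ in an open domain, extended holomorphically to $w=0$), and $\zeta_N(s)=\exp\big(\frac{\partial}{\partial w}Z_N(w,s)\big|_{w=0}\big)$, continued meromorphically in $s$; $N^*(u)=N(1/u)$. $\zeta_{\mathbb G_m^r/\mathbb F_1}$ is the Soulé zeta function of the counting polynomial $(x-1)^r=\sum_k a_kx^k$ of $\mathbb G_m^r$, i.e. $\zeta_{\mathbb G_m^r/\mathbb F_1}(s)=\prod_{k=0}^r(s-k)^{-a_k}$ with $a_k=\binom rk(-1)^{r-k}$. *)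

theory Defs
  imports "HOL-Analysis.Analysis"
begin

definition Z_fun :: "(real \<Rightarrow> complex) \<Rightarrow> complex \<Rightarrow> complex \<Rightarrow> complex" where
  "Z_fun N w s =
     (LINT u:{1<..}|lborel. N u * (complex_of_real u) powr (-(s + 1))
                            * (complex_of_real (ln u)) powr (w - 1)) / Gamma w"

definition Z_integrable :: "(real \<Rightarrow> complex) \<Rightarrow> complex \<Rightarrow> complex \<Rightarrow> bool" where
  "Z_integrable N w s =
     set_integrable lborel {1<..}
       (\<lambda>u. N u * (complex_of_real u) powr (-(s + 1)) * (complex_of_real (ln u)) powr (w - 1))"

text \<open>zeta_N(s) = exp(d/dw Z_N(w,s) at w=0), where w \<mapsto> Z_N(w,s) is extended holomorphically
  from its domain of convergence (intersected with Re w > 0) to an open set containing 0.\<close>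
definition zeta_N :: "(real \<Rightarrow> complex) \<Rightarrow> complex \<Rightarrow> complex" where
  "zeta_N N s = exp (THE d. \<exists>g U. open U \<and> 0 \<in> U \<and> g holomorphic_on U \<and>
       (\<forall>w\<in>U. 0 < Re w \<longrightarrow> Z_integrable N w s \<and> g w = Z_fun N w s) \<and> d = deriv g 0)"

definition a_coeff :: "nat \<Rightarrow> nat \<Rightarrow> int" where
  "a_coeff r k = int (r choose k) * (-1) ^ (r - k)"

definition zeta_Gm :: "nat \<Rightarrow> complex \<Rightarrow> complex" where
  "zeta_Gm r s = (\<Prod>k\<in>{0..r}. (s - of_nat k) powi (- a_coeff r k))"

end

theory Submission
  imports Defs "HOL-Complex_Analysis.Complex_Analysis"
begin


lemma pw:
  fixes c s :: real and z :: complex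
  assumes c: "c > 0" and s: "s > 0"
  shows "\<bar>exp (s/c)/c\<bar> *\<^sub>R ((complex_of_real (exp (s/c))) powr (-(of_real c + 1))
            * (complex_of_real (ln (exp (s/c)))) powr (z - 1))
         = exp (- z * of_real (ln c)) * (of_real s powr (z - 1) / of_real (exp s))"
proof -
  have "\<bar>exp (s/c)/c\<bar> = exp (s/c - ln c)" using c by (simp add: exp_diff)
  moreover have "(complex_of_real (exp (s/c))) powr (-(of_real c + 1)) = exp (-(of_real c + 1) * of_real (s/c))"
    by (simp add: powr_def Ln_of_real)
  moreover have "(complex_of_real (ln (exp (s/c)))) powr (z - 1) = exp ((z-1) * of_real (ln s - ln c))"
  proof -
    have "Ln (complex_of_real (s/c)) = of_real (ln (s/c))" using c s by (intro Ln_of_real) auto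
    then show ?thesis using c s by (simp add: powr_def ln_div del: of_real_divide)
  qed
  moreover have "of_real s powr (z - 1) = exp ((z-1) * of_real (ln s))"
    using s by (simp add: powr_def Ln_of_real)
  moreover have "complex_of_real (exp s) = exp (of_real s)" by (simp add: exp_of_real)
  ultimately show ?thesis
    using c apply (simp add: scaleR_conv_of_real exp_of_real[symmetric] flip: exp_add exp_diff)
    apply (rule arg_cong[where f=exp])
    apply (simp add: field_simps)
    done
qed
lemma mellin_real:
  fixes c :: real and z :: complex
  assumes c: "c > 0" and z: "Re z > 0"
  shows "(\<lambda>u. complex_of_real u powr (-(of_real c + 1)) * of_real (ln u) powr (z - 1))
            absolutely_integrable_on {1<..}
       \<and> integral {1<..} (\<lambda>u. complex_of_real u powr (-(of_real c + 1)) * of_real (ln u) powr (z - 1))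
            = exp (- z * of_real (ln c)) * Gamma z"
proof -
  define f where "f = (\<lambda>u. complex_of_real u powr (-(of_real c + 1)) * of_real (ln u) powr (z - 1))"
  define K where "K = exp (- z * of_real (ln c))"
  have img: "(\<lambda>s. exp (s/c)) ` {0<..} = {1<..}"
  proof (rule set_eqI, rule iffI)
    fix u :: real assume "u \<in> (\<lambda>s. exp (s/c)) ` {0<..}" then show "u \<in> {1<..}" using c by auto
  next
    fix u :: real assume u: "u \<in> {1<..}"
    then have "u = exp ((c * ln u)/c)" "c * ln u > 0" using c by auto
    then show "u \<in> (\<lambda>s. exp (s/c)) ` {0<..}" by blast
  qed
  have der: "((\<lambda>s. exp (s/c)) has_field_derivative exp (s/c)/c) (at s within {0<..})" for s
    using c by (auto intro!: derivative_eq_intros)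
  have inj: "inj_on (\<lambda>s. exp (s/c)) {0<..}" using c by (auto simp: inj_on_def)
  note cov = has_absolute_integral_change_of_variables_real[OF _ der inj, of f "K * Gamma z", unfolded img]
  have eq: "\<And>s. s \<in> {0<..} \<Longrightarrow> \<bar>exp (s/c)/c\<bar> *\<^sub>R f (exp (s/c)) = K * (of_real s powr (z - 1) / of_real (exp s))"
    unfolding f_def K_def using c by (intro pw) auto
  have ai: "(\<lambda>s. K * (of_real s powr (z - 1) / of_real (exp s))) absolutely_integrable_on {0<..}"
    by (intro set_integrable_mult_right absolutely_integrable_Gamma_integral' z)
  have hi: "((\<lambda>s. K * (of_real s powr (z - 1) / of_real (exp s))) has_integral K * Gamma z) {0<..}"
    by (intro has_integral_mult_right Gamma_integral_complex' z)
  have "(\<lambda>s. \<bar>exp (s/c)/c\<bar> *\<^sub>R f (exp (s/c))) absolutely_integrable_on {0<..}"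
  proof -
    have "set_integrable lebesgue {0<..} (\<lambda>s. \<bar>exp (s/c)/c\<bar> *\<^sub>R f (exp (s/c)))
        = set_integrable lebesgue {0<..} (\<lambda>s. K * (of_real s powr (z - 1) / of_real (exp s)))"
      by (intro set_integrable_cong refl eq)
    then show ?thesis using ai by simp
  qed
  moreover have "integral {0<..} (\<lambda>s. \<bar>exp (s/c)/c\<bar> *\<^sub>R f (exp (s/c))) = K * Gamma z"
    using hi eq by (subst integral_cong[of _ _ "\<lambda>s. K * (of_real s powr (z - 1) / of_real (exp s))"]) (auto simp: integral_unique)
  ultimately show ?thesis using cov unfolding f_def K_def by auto
qed

definition Fm :: "complex \<Rightarrow> complex \<Rightarrow> real \<Rightarrow> complex" where
  "Fm a w u = complex_of_real u powr (-(a + 1)) * of_real (ln u) powr (w - 1)"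

lemma mellin_real':
  fixes c :: real and z :: complex
  assumes c: "c > 0" and z: "Re z > 0"
  shows "(Fm (of_real c) z has_integral (exp (- z * of_real (ln c)) * Gamma z)) {1<..}"
    "Fm (of_real c) z absolutely_integrable_on {1<..}"
  using mellin_real[OF assms] unfolding Fm_def
  by (auto simp: has_integral_integral dest: set_lebesgue_integral_eq_integral(1))

lemma norm_Fm:
  assumes "u > 1"
  shows "norm (Fm a w u) = u powr (-(Re a + 1)) * ln u powr (Re w - 1)"
  using assms unfolding Fm_def norm_mult
  by (subst (1 2) norm_powr_real_powr) auto

lemma Fm_shift:
  assumes "u > 1"
  shows "Fm a w u = exp (- b * of_real (ln u)) * Fm (a - b) w u"
proof -
  have "complex_of_real u powr (-(a + 1)) = complex_of_real u powr (-b) * complex_of_real u powr (-(a - b + 1))"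
    by (simp flip: powr_add)
  moreover have "complex_of_real u powr (-b) = exp (- b * of_real (ln u))"
    using assms by (simp add: powr_def Ln_of_real)
  ultimately show ?thesis unfolding Fm_def by simp
qed

lemma Fm_pow:
  assumes "u > 1"
  shows "of_real (ln u) ^ n * Fm a w u = Fm a (w + of_nat n) u"
proof -
  have "of_real (ln u) powr (w + of_nat n - 1) = of_real (ln u) powr (of_nat n) * of_real (ln u) powr (w - 1)"
    by (simp flip: powr_add add: algebra_simps)
  moreover have "of_real (ln u) powr (of_nat n) = (of_real (ln u) :: complex) ^ n"
    using assms by (simp add: powr_nat)
  ultimately show ?thesis unfolding Fm_def by (simp add: algebra_simps)
qed



lemma exp_partial_le:
  fixes x :: real assumes "x \<ge> 0"
  shows "(\<Sum>n<N. x ^ n / fact n) \<le> exp x"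
proof -
  have "(\<Sum>n<N. x ^ n /\<^sub>R fact n) \<le> (\<Sum>n. x ^ n /\<^sub>R fact n)"
    using assms by (intro sum_le_suminf sums_summable[OF exp_converges]) auto
  then show ?thesis by (simp add: exp_def divide_inverse mult.commute)
qed

lemma mellin_complex:
  fixes a z :: complex
  assumes a: "Re a > 0" and z: "Re z > 0"
  shows "(Fm a z has_integral (exp (- z * Ln a) * Gamma z)) {1<..}"
    "Fm a z absolutely_integrable_on {1<..}"
proof -
  define a0 :: real where "a0 = (cmod a)^2 / Re a + 1"
  define b where "b = a - of_real a0"
  define \<rho> where "\<rho> = cmod b"
  define \<delta> where "\<delta> = a0 - \<rho>"
  have a0: "a0 > 0" using a unfolding a0_def by (simp add: add_nonneg_pos)
  have "cmod b ^ 2 = (Re a - a0)^2 + (Im a)^2" unfolding b_def by (simp add: cmod_power2)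
  also have "\<dots> = (cmod a)^2 - 2 * a0 * Re a + a0^2" using cmod_power2[of a] by (simp add: power2_eq_square algebra_simps)
  also have "2 * a0 * Re a = 2 * (cmod a)^2 + 2 * Re a" using a by (simp add: a0_def field_simps)
  finally have "cmod b ^ 2 = a0^2 - 2 * Re a - (cmod a)^2" by simp
  then have "cmod b ^ 2 < a0 ^ 2" using a zero_le_power2[of "cmod a"] by linarith
  then have rho: "\<rho> < a0" unfolding \<rho>_def using a0 by (metis power_less_imp_less_base less_eq_real_def)
  have delta: "\<delta> > 0" using rho by (simp add: \<delta>_def)
  have rho0: "\<rho> \<ge> 0" by (simp add: \<rho>_def)
  have Rea: "Re a \<ge> \<delta>"
  proof -
    have "Re (of_real a0 - a) \<le> cmod (of_real a0 - a)" by (rule complex_Re_le_cmod)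
    then show ?thesis by (simp add: \<delta>_def \<rho>_def b_def norm_minus_commute)
  qed
  define c where "c = (\<lambda>n::nat. (-b)^n / fact n)"
  define t where "t = (\<lambda>n::nat. c n * (exp (- (z + of_nat n) * of_real (ln a0)) * Gamma (z + of_nat n)))"
  define f where "f = (\<lambda>N u. \<Sum>n<N. c n * (of_real (ln u) ^ n * Fm (of_real a0) z u))"
  define h where "h = (\<lambda>u. norm (Fm (of_real \<delta>) (of_real (Re z)) u))"
  have zn: "Re (z + of_nat n) > 0" for n using z by simp
  have tm: "((\<lambda>u. c n * (of_real (ln u) ^ n * Fm (of_real a0) z u)) has_integral t n) {1<..}" for n
  proof -
    have "((\<lambda>u. c n * Fm (of_real a0) (z + of_nat n) u) has_integral t n) {1<..}"
      unfolding t_def by (intro has_integral_mult_right mellin_real'(1) a0 zn)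
    moreover have "((\<lambda>u. c n * (of_real (ln u) ^ n * Fm (of_real a0) z u)) has_integral t n) {1<..}
       = ((\<lambda>u. c n * Fm (of_real a0) (z + of_nat n) u) has_integral t n) {1<..}"
      by (intro has_integral_cong) (auto simp: Fm_pow)
    ultimately show ?thesis by simp
  qed
  have fint: "(f N has_integral (\<Sum>n<N. t n)) {1<..}" for N
    unfolding f_def by (intro has_integral_sum tm) auto
  have hint: "h integrable_on {1<..}"
    unfolding h_def using mellin_real'(2)[OF delta, of "of_real (Re z)"] z
    by (auto simp: absolutely_integrable_on_def)
  have bound: "norm (f N u) \<le> h u" if u: "u \<in> {1<..}" for N u
  proof -
    have u1: "u > 1" using u by simp
    have "norm (f N u) \<le> (\<Sum>n<N. norm (c n * (of_real (ln u) ^ n * Fm (of_real a0) z u)))"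
      unfolding f_def by (rule norm_sum)
    also have "\<dots> = (\<Sum>n<N. (\<rho> * ln u) ^ n / fact n) * norm (Fm (of_real a0) z u)"
      unfolding sum_distrib_right using u1
      by (intro sum.cong refl) (simp add: c_def norm_mult norm_divide norm_power \<rho>_def power_mult_distrib)
    also have "\<dots> \<le> exp (\<rho> * ln u) * norm (Fm (of_real a0) z u)"
      using u1 rho0 by (intro mult_right_mono exp_partial_le) auto
    also have "\<dots> = h u"
      unfolding h_def using u1 by (simp add: norm_Fm powr_def \<delta>_def algebra_simps flip: exp_add)
    finally show ?thesis .
  qed
  have conv: "(\<lambda>N. f N u) \<longlonglongrightarrow> Fm a z u" if u: "u \<in> {1<..}" for u
  proof -
    have u1: "u > 1" using u by simp
    have "(\<lambda>N. \<Sum>n<N. (- b * of_real (ln u)) ^ n /\<^sub>R fact n) \<longlonglongrightarrow> exp (- b * of_real (ln u))"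
      using exp_converges[of "- b * of_real (ln u)"] by (simp add: sums_def)
    then have "(\<lambda>N. (\<Sum>n<N. (- b * of_real (ln u)) ^ n /\<^sub>R fact n) * Fm (of_real a0) z u)
               \<longlonglongrightarrow> exp (- b * of_real (ln u)) * Fm (of_real a0) z u"
      by (intro tendsto_mult tendsto_const)
    moreover have "(\<Sum>n<N. (- b * of_real (ln u)) ^ n /\<^sub>R fact n) * Fm (of_real a0) z u = f N u" for N
      unfolding f_def sum_distrib_right c_def
      by (intro sum.cong refl) (simp only: power_mult_distrib scaleR_conv_of_real, simp add: divide_inverse mult_ac)
    moreover have "exp (- b * of_real (ln u)) * Fm (of_real a0) z u = Fm a z u"
      using Fm_shift[OF u1, of a z b] by (simp add: b_def)
    ultimately show ?thesis by simp
  qed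
  have fint': "f N integrable_on {1<..}" for N using fint by blast
  note dc = dominated_convergence[OF fint' hint bound conv]
  have lim1: "(\<lambda>N. \<Sum>n<N. t n) \<longlonglongrightarrow> integral {1<..} (Fm a z)"
  proof -
    have "integral {1<..} (f N) = (\<Sum>n<N. t n)" for N using fint[of N] by (rule integral_unique)
    then show ?thesis using dc(2) by simp
  qed
  have ser: "t sums (exp (- z * Ln a) * Gamma z)"
  proof -
    have nz: "z \<notin> \<int>\<^sub>\<le>\<^sub>0" using z by (auto elim!: nonpos_Ints_cases)
    have nb: "norm (b / of_real a0) < 1" using rho a0 by (simp add: norm_divide \<rho>_def)
    have "(\<lambda>n. ((-z) gchoose n) * (b / of_real a0) ^ n) sums (1 + b / of_real a0) powr (-z)"
      by (rule gen_binomial_complex[OF nb])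
    then have "(\<lambda>n. (Gamma z * exp (- z * of_real (ln a0))) * (((-z) gchoose n) * (b / of_real a0) ^ n))
        sums ((Gamma z * exp (- z * of_real (ln a0))) * (1 + b / of_real a0) powr (-z))"
      by (rule sums_mult)
    moreover have T: "(Gamma z * exp (- z * of_real (ln a0))) * (((-z) gchoose n) * (b / of_real a0) ^ n) = t n" for n
    proof -
      have G: "Gamma (z + of_nat n) = pochhammer z n * Gamma z"
        using pochhammer_Gamma[OF nz, of n] Gamma_eq_zero_iff[of z] nz by (auto simp: field_simps)
      have E: "exp (- (z + of_nat n) * of_real (ln a0)) = exp (- z * of_real (ln a0)) * inverse (of_real a0) ^ n"
      proof -
        have "exp (- (of_nat n) * complex_of_real (ln a0)) = inverse (exp (of_real (ln a0))) ^ n"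
          by (simp add: exp_minus exp_of_nat_mult[symmetric] power_inverse)
        also have "exp (complex_of_real (ln a0)) = of_real a0" using a0 by (simp add: exp_of_real)
        finally have e1: "exp (- (of_nat n) * complex_of_real (ln a0)) = inverse (of_real a0) ^ n" .
        have "exp (- (z + of_nat n) * of_real (ln a0)) = exp (- z * of_real (ln a0)) * exp (- (of_nat n) * complex_of_real (ln a0))"
          by (simp add: algebra_simps flip: exp_add)
        then show ?thesis using e1 by simp
      qed
      have P1: "(-b)^n = (-1)^n * b^n" by (rule power_minus)
      have P2: "(b / of_real a0)^n = b^n * inverse (of_real a0)^n" by (simp add: divide_inverse power_mult_distrib)
      show ?thesis unfolding t_def c_def G E gbinomial_pochhammer P1 P2 minus_minus
        by (simp add: divide_inverse mult_ac)
    qed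
    moreover have E: "(Gamma z * exp (- z * of_real (ln a0))) * (1 + b / of_real a0) powr (-z) = exp (- z * Ln a) * Gamma z"
    proof -
      have a_nz: "a \<noteq> 0" using a by auto
      have "1 + b / of_real a0 = a / of_real a0" using a0 by (simp add: b_def field_simps)
      then have "(1 + b / of_real a0) powr (-z) = exp (- z * (Ln a - of_real (ln a0)))"
        using a0 a_nz by (simp add: powr_def Ln_divide_of_real)
      then show ?thesis by (simp add: algebra_simps flip: exp_add)
    qed
    ultimately show ?thesis unfolding T E by blast
  qed
  have "integral {1<..} (Fm a z) = exp (- z * Ln a) * Gamma z"
    using lim1 ser unfolding sums_def by (rule LIMSEQ_unique)
  then show "(Fm a z has_integral (exp (- z * Ln a) * Gamma z)) {1<..}"
    using dc(1) by (metis has_integral_integral)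
  show "Fm a z absolutely_integrable_on {1<..}"
  proof (rule absolutely_integrable_integrable_bound[OF _ dc(1) hint])
    fix u :: real assume u: "u \<in> {1<..}"
    then have u1: "u > 1" by simp
    have "u powr (-(Re a + 1)) \<le> u powr (-(\<delta> + 1))" using u1 Rea by (intro powr_mono) auto
    then show "norm (Fm a z u) \<le> h u" unfolding h_def using u1
      by (simp add: norm_Fm mult_right_mono)
  qed
qed



lemma Z_generic:
  fixes N :: "real \<Rightarrow> complex" and K :: "nat set" and cf e :: "nat \<Rightarrow> complex"
  assumes K: "finite K"
    and Neq: "\<And>u. u > 1 \<Longrightarrow> N u * of_real u powr (-(s + 1)) = (\<Sum>k\<in>K. cf k * of_real u powr (-(s + e k + 1)))"
    and pos: "\<And>k. k \<in> K \<Longrightarrow> Re (s + e k) > 0"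
    and w: "Re w > 0"
  shows "Z_integrable N w s \<and> Z_fun N w s = (\<Sum>k\<in>K. cf k * exp (- w * Ln (s + e k)))"
proof -
  define G where "G = (\<lambda>u. \<Sum>k\<in>K. cf k * Fm (s + e k) w u)"
  have pw: "N u * of_real u powr (-(s + 1)) * of_real (ln u) powr (w - 1) = G u" if "u \<in> {1<..}" for u
    using that unfolding G_def Fm_def Neq[of u, OF that[simplified]] sum_distrib_right
    by (intro sum.cong refl) (simp add: algebra_simps)
  have ai: "G absolutely_integrable_on {1<..}"
    unfolding G_def using K
    by (intro absolutely_integrable_sum set_integrable_mult_right mellin_complex(2) pos w) auto
  have hi: "(G has_integral (\<Sum>k\<in>K. cf k * (exp (- w * Ln (s + e k)) * Gamma w))) {1<..}"
    unfolding G_def by (intro has_integral_sum K has_integral_mult_right mellin_complex(1) pos w)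
  have meas: "(\<lambda>u. indicator {1<..} u *\<^sub>R G u) \<in> borel_measurable lborel"
    unfolding G_def Fm_def by measurable
  have ai2: "set_integrable lborel {1<..} G"
    using ai meas unfolding set_integrable_def by (simp add: integrable_completion)
  have "(LINT u:{1<..}|lborel. G u) = (LINT u:{1<..}|lebesgue. G u)"
    unfolding set_lebesgue_integral_def using meas by (simp add: integral_completion)
  also have "\<dots> = integral {1<..} G" by (rule set_lebesgue_integral_eq_integral(2)[OF ai])
  also have "\<dots> = (\<Sum>k\<in>K. cf k * (exp (- w * Ln (s + e k)) * Gamma w))" using hi by (rule integral_unique)
  finally have li: "(LINT u:{1<..}|lborel. G u) = (\<Sum>k\<in>K. cf k * (exp (- w * Ln (s + e k)) * Gamma w))" .
  have "Z_integrable N w s"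
  proof -
    have "set_integrable lborel {1<..} (\<lambda>u. N u * of_real u powr (-(s + 1)) * of_real (ln u) powr (w - 1))
        = set_integrable lborel {1<..} G"
      using pw by (intro set_integrable_cong refl) auto
    then show ?thesis unfolding Z_integrable_def using ai2 by simp
  qed
  moreover have "Z_fun N w s = (LINT u:{1<..}|lborel. G u) / Gamma w"
    unfolding Z_fun_def by (subst set_lebesgue_integral_cong[of _ _ _ G]) (use pw in auto)
  moreover have "Gamma w \<noteq> 0" using w by (auto simp: Gamma_eq_zero_iff elim!: nonpos_Ints_cases)
  ultimately show ?thesis using li by (simp add: sum_divide_distrib)
qed

lemma zeta_generic:
  fixes N :: "real \<Rightarrow> complex" and K :: "nat set" and cf e :: "nat \<Rightarrow> complex"
  assumes K: "finite K"
    and Neq: "\<And>u. u > 1 \<Longrightarrow> N u * of_real u powr (-(s + 1)) = (\<Sum>k\<in>K. cf k * of_real u powr (-(s + e k + 1)))"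
    and pos: "\<And>k. k \<in> K \<Longrightarrow> Re (s + e k) > 0"
  shows "zeta_N N s = exp (- (\<Sum>k\<in>K. cf k * Ln (s + e k)))"
proof -
  define G0 where "G0 = (\<lambda>w. \<Sum>k\<in>K. cf k * exp (- w * Ln (s + e k)))"
  have hol: "G0 holomorphic_on UNIV" unfolding G0_def by (intro holomorphic_intros)
  have "(G0 has_field_derivative (\<Sum>k\<in>K. cf k * (exp (- 0 * Ln (s + e k)) * (- Ln (s + e k))))) (at 0)"
    unfolding G0_def by (auto intro!: derivative_eq_intros sum.cong simp: mult.commute)
  then have "deriv G0 0 = (\<Sum>k\<in>K. cf k * (exp (- 0 * Ln (s + e k)) * (- Ln (s + e k))))"
    by (rule DERIV_imp_deriv)
  also have "\<dots> = - (\<Sum>k\<in>K. cf k * Ln (s + e k))"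
    unfolding sum_negf[symmetric] by (intro sum.cong) auto
  finally have dG: "deriv G0 0 = - (\<Sum>k\<in>K. cf k * Ln (s + e k))" .
  define P where "P = (\<lambda>d. \<exists>g U. open U \<and> 0 \<in> U \<and> g holomorphic_on U \<and>
       (\<forall>w\<in>U. 0 < Re w \<longrightarrow> Z_integrable N w s \<and> g w = Z_fun N w s) \<and> d = deriv g 0)"
  have ZG: "Z_integrable N w s \<and> G0 w = Z_fun N w s" if "Re w > 0" for w
    using Z_generic[OF K Neq pos that] unfolding G0_def by auto
  have "P (deriv G0 0)" unfolding P_def
    by (rule exI[of _ G0], rule exI[of _ UNIV]) (use hol ZG in auto)
  moreover have "d = deriv G0 0" if "P d" for d
  proof -
    obtain g U where U: "open U" "0 \<in> U" "g holomorphic_on U"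
       and eq: "\<forall>w\<in>U. 0 < Re w \<longrightarrow> Z_integrable N w s \<and> g w = Z_fun N w s" and d: "d = deriv g 0"
      using \<open>P d\<close> unfolding P_def by blast
    obtain \<epsilon> where \<epsilon>: "\<epsilon> > 0" "ball 0 \<epsilon> \<subseteq> U" using U open_contains_ball by blast
    have "g w = G0 w" if "w \<in> ball 0 \<epsilon>" for w
    proof (rule analytic_continuation_open[of "ball 0 \<epsilon> \<inter> {w. Re w > 0}" "ball 0 \<epsilon>" g G0 w])
      show "open (ball 0 \<epsilon> \<inter> {w. Re w > 0})" by (intro open_Int open_halfspace_Re_gt open_ball)
      have "complex_of_real (\<epsilon>/2) \<in> ball 0 \<epsilon> \<inter> {w. Re w > 0}" using \<epsilon> by auto
      then show "ball 0 \<epsilon> \<inter> {w. Re w > 0} \<noteq> {}" by blast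
      show "g holomorphic_on ball 0 \<epsilon>" by (rule holomorphic_on_subset[OF U(3) \<epsilon>(2)])
      show "G0 holomorphic_on ball 0 \<epsilon>" using hol by (rule holomorphic_on_subset) auto
      show "\<And>z. z \<in> ball 0 \<epsilon> \<inter> {w. 0 < Re w} \<Longrightarrow> g z = G0 z"
        using eq \<epsilon>(2) ZG by auto
    qed (use that in auto)
    then have "eventually (\<lambda>w. g w = G0 w) (nhds 0)"
      using \<epsilon>(1) by (intro eventually_nhds_in_open[of "ball 0 \<epsilon>", THEN eventually_mono]) auto
    then show ?thesis using d by (simp add: deriv_cong_ev)
  qed
  ultimately have "(THE d. P d) = deriv G0 0" by (rule the_equality)
  then show ?thesis unfolding zeta_N_def P_def[symmetric] dG by simp
qed



lemma exp_sum_Ln: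
  fixes z :: "nat \<Rightarrow> complex" and m :: "nat \<Rightarrow> int"
  assumes "finite K" "\<And>k. k \<in> K \<Longrightarrow> z k \<noteq> 0"
  shows "exp (- (\<Sum>k\<in>K. of_int (m k) * Ln (z k))) = (\<Prod>k\<in>K. z k powi (- m k))"
proof -
  have "exp (- (\<Sum>k\<in>K. of_int (m k) * Ln (z k))) = exp (\<Sum>k\<in>K. of_int (- m k) * Ln (z k))"
    by (simp add: sum_negf)
  also have "\<dots> = (\<Prod>k\<in>K. exp (of_int (- m k) * Ln (z k)))"
    by (rule exp_sum[OF assms(1)])
  also have "\<dots> = (\<Prod>k\<in>K. z k powi (- m k))"
  proof (intro prod.cong refl)
    fix k assume "k \<in> K"
    then have "z k \<noteq> 0" using assms by auto
    then show "exp (of_int (- m k) * Ln (z k)) = z k powi (- m k)"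
      using complex_powr_of_int[of "z k" "- m k"] by (simp add: powr_def)
  qed
  finally show ?thesis .
qed

lemma prod_powi:
  fixes f :: "nat \<Rightarrow> complex"
  assumes "finite A"
  shows "(\<Prod>i\<in>A. f i) powi n = (\<Prod>i\<in>A. f i powi n)"
  using assms by induction (auto simp: power_int_mult_distrib)

lemma prod_neg1_powi:
  assumes "finite A"
  shows "(\<Prod>i\<in>A. (-1::complex) powi (m i)) = (-1) powi (\<Sum>i\<in>A. m i)"
  using assms by induction (auto simp: power_int_add)

lemma powr_shift_nat:
  assumes u: "u > 1"
  shows "complex_of_real u powr (-(s + 1)) * inverse (of_real u) ^ k = of_real u powr (-(s + of_nat k + 1))"
proof -
  have "complex_of_real u powr (-(s + of_nat k + 1)) = of_real u powr (-(s + 1)) * of_real u powr (- of_nat k)"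
    by (simp flip: powr_add add: algebra_simps)
  moreover have "complex_of_real u powr (- of_nat k) = inverse (of_real u) ^ k"
    using u by (simp add: powr_minus powr_nat power_inverse)
  ultimately show ?thesis by simp
qed

lemma powr_shift_nat':
  assumes u: "u > 1"
  shows "complex_of_real u powr (-(s + 1)) * (of_real u) ^ k = of_real u powr (-(s + - of_nat k + 1))"
proof -
  have "complex_of_real u powr (-(s + - of_nat k + 1)) = of_real u powr (-(s + 1)) * of_real u powr (of_nat k)"
    by (simp flip: powr_add add: algebra_simps)
  moreover have "complex_of_real u powr (of_nat k) = (of_real u) ^ k"
    using u by (simp add: powr_nat)
  ultimately show ?thesis by simp
qed

definition cfi :: "nat \<Rightarrow> nat \<Rightarrow> int" where "cfi r k = int (r choose k) * (-1) ^ k"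

lemma expandA:
  assumes u: "u > 1"
  shows "(1 - 1 / complex_of_real u) ^ r * of_real u powr (-(s + 1))
       = (\<Sum>k\<in>{0..r}. of_int (cfi r k) * of_real u powr (-(s + of_nat k + 1)))"
proof -
  have "(1 - 1 / complex_of_real u) ^ r = (- inverse (of_real u) + 1) ^ r" by (simp add: divide_inverse)
  also have "\<dots> = (\<Sum>k\<le>r. of_nat (r choose k) * (- inverse (of_real u)) ^ k * 1 ^ (r - k))"
    by (rule binomial_ring)
  finally have BIN: "(1 - 1 / complex_of_real u) ^ r = (\<Sum>k\<le>r. of_nat (r choose k) * (- inverse (of_real u)) ^ k * 1 ^ (r - k))" .
  note PM = power_minus[of "inverse (complex_of_real u)"]
  have "(1 - 1 / complex_of_real u) ^ r * of_real u powr (-(s + 1))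
     = (\<Sum>k\<le>r. of_nat (r choose k) * (-1) ^ k * (of_real u powr (-(s + 1)) * inverse (of_real u) ^ k))"
    unfolding BIN sum_distrib_right by (intro sum.cong refl) (simp only: PM power_one mult_1_right mult_1_left mult_ac)
  also have "\<dots> = (\<Sum>k\<in>{0..r}. of_int (cfi r k) * of_real u powr (-(s + of_nat k + 1)))"
    unfolding atLeast0AtMost cfi_def powr_shift_nat[OF u, symmetric] by simp
  finally show ?thesis .
qed

lemma expandB:
  assumes u: "u > 1"
  shows "(1 - 1 / complex_of_real (1 / u)) ^ r * of_real u powr (-(s + 1))
       = (\<Sum>k\<in>{0..r}. of_int (cfi r k) * of_real u powr (-(s + - of_nat k + 1)))"
proof -
  have "(1 - 1 / complex_of_real (1 / u)) ^ r = (- (of_real u) + 1) ^ r" by simp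
  also have "\<dots> = (\<Sum>k\<le>r. of_nat (r choose k) * (- (of_real u)) ^ k * 1 ^ (r - k))"
    by (rule binomial_ring)
  finally have BIN: "(1 - 1 / complex_of_real (1 / u)) ^ r = (\<Sum>k\<le>r. of_nat (r choose k) * (- (of_real u)) ^ k * 1 ^ (r - k))" .
  note PM = power_minus[of "complex_of_real u"]
  have "(1 - 1 / complex_of_real (1 / u)) ^ r * of_real u powr (-(s + 1))
     = (\<Sum>k\<le>r. of_nat (r choose k) * (-1) ^ k * (of_real u powr (-(s + 1)) * (of_real u) ^ k))"
    unfolding BIN sum_distrib_right by (intro sum.cong refl) (simp only: PM power_one mult_1_right mult_1_left mult_ac)
  also have "\<dots> = (\<Sum>k\<in>{0..r}. of_int (cfi r k) * of_real u powr (-(s + - of_nat k + 1)))"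
    unfolding atLeast0AtMost cfi_def powr_shift_nat'[OF u, symmetric] by simp
  finally show ?thesis .
qed



lemma prod_rev0:
  fixes F :: "nat \<Rightarrow> complex"
  shows "(\<Prod>j\<in>{0..r}. F j) = (\<Prod>k\<in>{0..r}. F (r - k))"
  using prod.atLeastAtMost_rev[of F 0 r] by simp

lemma a_coeff_rev: "k \<le> r \<Longrightarrow> a_coeff r (r - k) = cfi r k"
  unfolding a_coeff_def cfi_def by (simp add: binomial_symmetric[symmetric])

lemma a_coeff_sign: "k \<le> r \<Longrightarrow> a_coeff r k * (-1) ^ r = cfi r k"
proof -
  assume k: "k \<le> r"
  have "(-1::int) ^ r = (-1) ^ (r - k) * (-1) ^ k" using k by (simp flip: power_add)
  then have "a_coeff r k * (-1) ^ r = int (r choose k) * ((-1) ^ (r - k) * (-1) ^ (r - k)) * (-1) ^ k"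
    unfolding a_coeff_def by (simp add: mult_ac)
  also have "(-1::int) ^ (r - k) * (-1) ^ (r - k) = 1" by (simp flip: power_add)
  finally show ?thesis by (simp add: cfi_def)
qed

lemma zeta_Gm_powi:
  "zeta_Gm r s powi ((-1) ^ r) = (\<Prod>k\<in>{0..r}. (s - of_nat k) powi (- cfi r k))"
proof -
  have "zeta_Gm r s powi ((-1) ^ r) = (\<Prod>k\<in>{0..r}. ((s - of_nat k) powi (- a_coeff r k)) powi ((-1) ^ r))"
    unfolding zeta_Gm_def by (rule prod_powi) simp
  also have "\<dots> = (\<Prod>k\<in>{0..r}. (s - of_nat k) powi (- cfi r k))"
  proof (intro prod.cong refl)
    fix k assume "k \<in> {0..r}"
    then have "- a_coeff r k * (-1) ^ r = - cfi r k" using a_coeff_sign[of k r] by simp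
    then show "((s - of_nat k) powi (- a_coeff r k)) powi ((-1) ^ r) = (s - of_nat k) powi (- cfi r k)"
      by (metis power_int_mult)
  qed
  finally show ?thesis .
qed

theorem proposition3p8:
  fixes r :: nat and N :: "real \<Rightarrow> complex"
  assumes "r \<ge> 1"
    and "N = (\<lambda>u. (1 - 1 / complex_of_real u) ^ r)"
  shows "(\<forall>s. of_nat r < Re s \<longrightarrow> zeta_N N s = zeta_Gm r (s + of_nat r))
       \<and> (\<forall>s. of_nat r < Re s \<longrightarrow> zeta_N (\<lambda>u. N (1 / u)) s = zeta_Gm r s powi ((-1) ^ r))
       \<and> (\<forall>s. s \<notin> of_nat ` {0..r} \<longrightarrow> zeta_Gm r (of_nat r - s) = zeta_Gm r s powi ((-1) ^ r))"
proof (intro conjI allI impI)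
  fix s :: complex assume s: "of_nat r < Re s"
  have "zeta_N N s = exp (- (\<Sum>k\<in>{0..r}. of_int (cfi r k) * Ln (s + of_nat k)))"
  proof (rule zeta_generic[where K="{0..r}" and cf="\<lambda>k. of_int (cfi r k)" and e="\<lambda>k. of_nat k"])
    show "\<And>u. u > 1 \<Longrightarrow> N u * of_real u powr (-(s + 1)) = (\<Sum>k\<in>{0..r}. of_int (cfi r k) * of_real u powr (-(s + of_nat k + 1)))"
      unfolding assms(2) by (rule expandA)
  qed (use s in simp_all)
  also have "\<dots> = (\<Prod>k\<in>{0..r}. (s + of_nat k) powi (- cfi r k))"
  proof (rule exp_sum_Ln)
    fix k assume "k \<in> {0..r}"
    have "Re (s + of_nat k) > 0" using s by simp
    then have "Re (s + of_nat k) \<noteq> Re 0" by simp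
    then show "s + of_nat k \<noteq> 0" by metis
  qed simp
  also have "\<dots> = (\<Prod>k\<in>{0..r}. (s + of_nat r - of_nat (r - k)) powi (- a_coeff r (r - k)))"
    by (intro prod.cong refl) (auto simp: a_coeff_rev of_nat_diff)
  also have "\<dots> = zeta_Gm r (s + of_nat r)"
    unfolding zeta_Gm_def by (rule prod_rev0[symmetric])
  finally show "zeta_N N s = zeta_Gm r (s + of_nat r)" .
next
  fix s :: complex assume s: "of_nat r < Re s"
  have "zeta_N (\<lambda>u. N (1 / u)) s = exp (- (\<Sum>k\<in>{0..r}. of_int (cfi r k) * Ln (s + - of_nat k)))"
  proof (rule zeta_generic[where K="{0..r}" and cf="\<lambda>k. of_int (cfi r k)" and e="\<lambda>k. - of_nat k"])
    show "\<And>u. u > 1 \<Longrightarrow> N (1 / u) * of_real u powr (-(s + 1)) = (\<Sum>k\<in>{0..r}. of_int (cfi r k) * of_real u powr (-(s + - of_nat k + 1)))"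
      unfolding assms(2) by (rule expandB)
  qed (use s in simp_all)
  also have "\<dots> = (\<Prod>k\<in>{0..r}. (s + - of_nat k) powi (- cfi r k))"
  proof (rule exp_sum_Ln)
    fix k assume "k \<in> {0..r}"
    then have "Re (s + - of_nat k) > 0" using s by simp
    then have "Re (s + - of_nat k) \<noteq> Re 0" by simp
    then show "s + - of_nat k \<noteq> 0" by metis
  qed simp
  also have "\<dots> = zeta_Gm r s powi ((-1) ^ r)"
    unfolding zeta_Gm_powi by simp
  finally show "zeta_N (\<lambda>u. N (1 / u)) s = zeta_Gm r s powi ((-1) ^ r)" .
next
  fix s :: complex assume s: "s \<notin> of_nat ` {0..r}"
  have "zeta_Gm r (of_nat r - s) = (\<Prod>k\<in>{0..r}. (of_nat r - s - of_nat (r - k)) powi (- a_coeff r (r - k)))"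
    unfolding zeta_Gm_def by (rule prod_rev0)
  also have "\<dots> = (\<Prod>k\<in>{0..r}. (-1) powi (- cfi r k) * (s - of_nat k) powi (- cfi r k))"
  proof (intro prod.cong refl)
    fix k assume k: "k \<in> {0..r}"
    then have E: "of_nat r - s - of_nat (r - k) = (-1) * (s - of_nat k)" by (simp add: of_nat_diff)
    show "(of_nat r - s - of_nat (r - k)) powi (- a_coeff r (r - k)) = (-1) powi (- cfi r k) * (s - of_nat k) powi (- cfi r k)"
      unfolding E power_int_mult_distrib using k by (simp add: a_coeff_rev)
  qed
  also have "\<dots> = (-1) powi (\<Sum>k\<in>{0..r}. - cfi r k) * (\<Prod>k\<in>{0..r}. (s - of_nat k) powi (- cfi r k))"
    by (simp add: prod.distrib prod_neg1_powi)
  also have "(\<Sum>k\<in>{0..r}. - cfi r k) = 0"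
  proof -
    have "(\<Sum>k\<le>r. (-1) ^ k * int (r choose k)) = 0" using assms(1) by (intro choose_alternating_sum) auto
    then show ?thesis by (simp add: cfi_def atLeast0AtMost sum_negf mult.commute)
  qed
  finally show "zeta_Gm r (of_nat r - s) = zeta_Gm r s powi ((-1) ^ r)" unfolding zeta_Gm_powi by simp
qed


end
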